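(* Assume $a/b>\sqrt2$, $|u|<u_{\max}$ and $a^2+(u^2-2)c^2\ne0$. With $R$ and $R'$ as below, $$\frac1{R^2}+\frac1{R'^2}=\frac1{c^2},$$ i.e. half the harmonic mean of $R^2$ and $R'^2$ equals $c^2=a^2-b^2$, independently of $u$.
   Context: The elliptic billiard is $\mathcal{E}: x^2/a^2+y^2/b^2=1$, $a>b>0$, $c=\sqrt{a^2-b^2}$. For $a/b>\sqrt2$ the self-intersected 4-periodics are parametrized by $u$ with $|u|\le u_{\max}:=\frac{a}{c^2}\sqrt{a^2-2b^2}$. For parameter $u$, the vertices of the self-intersected 4-periodic and the foci lie on a circle of radius $R=\frac{a^2-c^2u^2}{2b\sqrt{1-u^2}}$, and the vertices of its outer polygon (the polygon whose vertices are intersections of tangent lines to $\mathcal{E}$ at consecutive vertices) and the foci lie on a circle of radius $|R'|$, where $R'=\frac{c(c^2u^2-a^2)}{a^2+(u^2-2)c^2}$. *)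

theory Defs
  imports Complex_Main
begin

definition foc :: "real \<Rightarrow> real \<Rightarrow> real" where
  "foc a b = sqrt (a^2 - b^2)"

definition umax :: "real \<Rightarrow> real \<Rightarrow> real" where
  "umax a b = a / (foc a b)^2 * sqrt (a^2 - 2*b^2)"

definition radR :: "real \<Rightarrow> real \<Rightarrow> real \<Rightarrow> real" where
  "radR a b u = (a^2 - (foc a b)^2 * u^2) / (2 * b * sqrt (1 - u^2))"

definition radR' :: "real \<Rightarrow> real \<Rightarrow> real \<Rightarrow> real" where
  "radR' a b u = foc a b * ((foc a b)^2 * u^2 - a^2) / (a^2 + (u^2 - 2) * (foc a b)^2)"

end

theory Submission
  imports Defs
begin

theorem mainTheorem4:
  fixes a b u :: real
  assumes "a > b" and "b > 0" and "a / b > sqrt 2"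
    and "\<bar>u\<bar> < umax a b"
    and "a^2 + (u^2 - 2) * (foc a b)^2 \<noteq> 0"
  shows "1 / (radR a b u)^2 + 1 / (radR' a b u)^2 = 1 / (foc a b)^2"
proof -
  define C where "C = (foc a b)^2"
  have ab: "b^2 < a^2" using assms by (simp add: power_strict_mono)
  have C: "C = a^2 - b^2" unfolding C_def foc_def using ab by simp
  have Cpos: "C > 0" using C ab by simp
  have s2: "a^2 > 2*b^2"
  proof -
    have "sqrt 2 * b < a" using assms by (simp add: pos_less_divide_eq)
    hence "(sqrt 2 * b)^2 < a^2" using assms
      by (intro power_strict_mono) auto
    thus ?thesis by (simp add: power_mult_distrib)
  qed
  have "a^2 * (a^2 - 2*b^2) < C^2" unfolding C power2_eq_square
    using assms by (simp add: algebra_simps)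
  hence "(a * sqrt (a^2 - 2*b^2))^2 < C^2"
    using s2 by (simp add: power_mult_distrib)
  hence "a * sqrt (a^2 - 2*b^2) < C"
    using Cpos by (meson abs_le_square_iff linorder_not_le power2_less_imp_less less_le_not_le)
  hence "umax a b < 1" unfolding umax_def C_def[symmetric] using Cpos
    by (simp add: divide_less_eq)
  hence "\<bar>u\<bar> < 1" using assms by simp
  hence u1: "u^2 < 1" by (simp add: abs_square_less_1)
  have "C * u^2 < C" using Cpos u1 by simp
  hence ne: "a^2 - C*u^2 \<noteq> 0" using C assms(2) by (smt (verit) zero_less_power)
  have sq: "(sqrt (1 - u^2))^2 = 1 - u^2" using u1 by simp
  have sqn: "sqrt (1 - u^2) \<noteq> 0" using u1 by simp
  have fc: "foc a b \<noteq> 0" using Cpos C_def by auto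
  have ne2: "a^2 + (u^2 - 2) * C \<noteq> 0" using assms C_def by simp
  have b2: "b^2 = a^2 - C" using C by simp
  have "1 / (radR a b u)^2 + 1 / (radR' a b u)^2
      = 4*b^2*(1-u^2)/(a^2 - C*u^2)^2 + (a^2 + (u^2 - 2) * C)^2 / (C * (C*u^2 - a^2)^2)"
    unfolding radR_def radR'_def C_def[symmetric]
    using ne ne2 sqn fc Cpos by (simp add: power_divide power_mult_distrib sq field_simps) (simp add: C_def power2_eq_square algebra_simps)
  also have "\<dots> = 1 / C"
    using ne ne2 Cpos unfolding b2
    by (simp add: field_simps) (simp add: power2_eq_square algebra_simps)
  finally show ?thesis unfolding C_def .
qed

end
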